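(* Let $\mu>0$, $u_a\in\mathbb{R}$, $\alpha_\pm>0$, $u_->u_+$, with Riemann data $(\alpha_0,u_0)=(\alpha_-,u_-)$ for $x<0$, $(\alpha_+,u_+)$ for $x>0$. Let $u_l(t)=u_a+(u_--u_a)e^{-\mu t}$, $u_r(t)=u_a+(u_+-u_a)e^{-\mu t}$, $\alpha_l\equiv\alpha_-$, $\alpha_r\equiv\alpha_+$. Let $(\omega,\sigma)\in\mathcal{C}^1([0,\infty))^2$ be a solution of the generalized Rankine–Hugoniot conditions $$\frac{d\omega}{dt}=(\alpha_r-\alpha_l)\sigma-(\alpha_ru_r-\alpha_lu_l),\quad \frac{d(\omega\sigma)}{dt}=(\alpha_ru_r-\alpha_lu_l)\sigma-(\alpha_ru_r^2-\alpha_lu_l^2)+\mu(u_a-\sigma)\omega,$$ with $\omega(0)=0$, satisfying $u_r(t)<\sigma(t)<u_l(t)$ for all $t\ge0$, and let $\xi(t)=\int_0^t\sigma(s)ds$. Then $\alpha=\alpha^0+\omega(t)\delta(x-\xi(t))$, $u=u^0$, with $(\alpha^0,u^0)=(\alpha_-,u_l(t))$ for $x<\xi(t)$ and $(\alpha_+,u_r(t))$ for $x>\xi(t)$, is a $\delta$-shock solution (weak solution satisfying Lax's entropy condition) of the Eulerian droplet model with these Riemann data.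
   Context: The Eulerian droplet model: $\partial_t\alpha+\partial_x(\alpha u)=0$, $\partial_t(\alpha u)+\partial_x(\alpha u^2)=\mu\alpha(u_a-u)$. For $\psi\in\mathcal{C}_0^\infty(\mathbb{R}\times[0,\infty))$: $\langle\alpha,\psi\rangle=\int_0^\infty\int\alpha^0\psi+\int_0^\infty\omega\psi(\xi(t),t)dt$, $\langle\alpha u,\psi\rangle=\int_0^\infty\int\alpha^0u^0\psi+\int_0^\infty\omega\xi'\psi(\xi(t),t)dt$, $\langle\alpha u^2,\psi\rangle=\int_0^\infty\int\alpha^0(u^0)^2\psi+\int_0^\infty\sigma\omega\xi'\psi(\xi(t),t)dt$, $\langle\alpha(u_a-u),\psi\rangle=\int_0^\infty\int\alpha^0(u_a-u^0)\psi+\int_0^\infty(u_a-\sigma)\omega\psi(\xi(t),t)dt$. Weak solution with $\omega_0=0$: for all such $\psi$, $\langle\alpha,\psi_t\rangle+\langle\alpha u,\psi_x\rangle=-\int\alpha_0\psi(x,0)dx$ and $\langle\alpha u,\psi_t\rangle+\langle\alpha u^2,\psi_x\rangle+\mu\langle\alpha(u_a-u),\psi\rangle=-\int\alpha_0u_0\psi(x,0)dx$. *)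

theory Defs
  imports "HOL-Analysis.Analysis"
begin

fun Ck :: "nat \<Rightarrow> (real \<times> real \<Rightarrow> real) \<Rightarrow> bool" where
  "Ck 0 f = continuous_on UNIV f"
| "Ck (Suc k) f = (\<exists>fx ft. (\<forall>p. (f has_derivative (\<lambda>h. fx p * fst h + ft p * snd h)) (at p))
                          \<and> Ck k fx \<and> Ck k ft)"

definition smooth2 :: "(real \<times> real \<Rightarrow> real) \<Rightarrow> bool" where
  "smooth2 f \<longleftrightarrow> (\<forall>k. Ck k f)"

text \<open>Test functions in C_0^infinity(R x [0,infinity)): smooth, and the support in the closed
  half plane t >= 0 is bounded (hence compact).\<close>
definition test_fun :: "(real \<times> real \<Rightarrow> real) \<Rightarrow> bool" where
  "test_fun \<psi> \<longleftrightarrow> smooth2 \<psi> \<and>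
     (\<exists>R. \<forall>x t. t \<ge> 0 \<longrightarrow> (\<bar>x\<bar> > R \<or> t > R) \<longrightarrow> \<psi> (x, t) = 0)"

definition px :: "(real \<times> real \<Rightarrow> real) \<Rightarrow> real \<Rightarrow> real \<Rightarrow> real" where
  "px \<psi> x t = deriv (\<lambda>y. \<psi> (y, t)) x"

definition pt :: "(real \<times> real \<Rightarrow> real) \<Rightarrow> real \<Rightarrow> real \<Rightarrow> real" where
  "pt \<psi> x t = deriv (\<lambda>s. \<psi> (x, s)) t"

definition dint :: "(real \<Rightarrow> real \<Rightarrow> real) \<Rightarrow> real" where
  "dint g = (LBINT t:{0..}. (LBINT x. g x t))"

definition tint :: "(real \<Rightarrow> real) \<Rightarrow> real" where
  "tint h = (LBINT t:{0..}. h t)"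

definition C1_halfline :: "(real \<Rightarrow> real) \<Rightarrow> bool" where
  "C1_halfline f \<longleftrightarrow> (\<exists>f'. (\<forall>t\<ge>0. (f has_real_derivative f' t) (at t within {0..}))
                             \<and> continuous_on {0..} f')"

end

theory Submission
  imports Defs
begin



lemma chain2:
  fixes \<psi> :: "real \<times> real \<Rightarrow> real"
  assumes "(\<psi> has_derivative (\<lambda>h. fx (X t, Y t) * fst h + ft (X t, Y t) * snd h)) (at (X t, Y t))"
    "(X has_real_derivative X') (at t within S)" "(Y has_real_derivative Y') (at t within S)"
  shows "((\<lambda>t. \<psi> (X t, Y t)) has_real_derivative (fx (X t, Y t) * X' + ft (X t, Y t) * Y')) (at t within S)"
proof -
  have "((\<lambda>t. (X t, Y t)) has_derivative (\<lambda>h. (X' * h, Y' * h))) (at t within S)"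
    by (rule has_derivative_Pair) (use assms(2,3) in \<open>simp_all add: has_field_derivative_def\<close>)
  from has_derivative_compose[OF this assms(1)]
  show ?thesis unfolding has_field_derivative_def
    by (rule has_derivative_eq_rhs) (auto simp: algebra_simps fun_eq_iff)
qed

lemma outer_int:
  fixes g h :: "real \<Rightarrow> real"
  assumes "0 \<le> T" "continuous_on {0..T} h" "\<And>t. t \<in> {0..T} \<Longrightarrow> g t = h t"
    "\<And>t. t > T \<Longrightarrow> g t = 0"
  shows "(LBINT t:{0..}. g t) = integral {0..T} h"
proof -
  have "(LBINT t:{0..}. g t) = (LBINT t:{0..T}. h t)"
    unfolding set_lebesgue_integral_def
    by (rule Bochner_Integration.integral_cong) (auto simp: indicator_def assms(3) assms(4) not_le)
  also have "\<dots> = integral {0..T} h"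
    by (rule set_borel_integral_eq_integral(2)[OF borel_integrable_atLeastAtMost'[OF assms(2)]])
  finally show ?thesis .
qed




lemma step_int:
  fixes q :: "real \<Rightarrow> real"
  assumes cont: "continuous_on UNIV q" and K: "0 < K" and van: "\<And>x. K < \<bar>x - s\<bar> \<Longrightarrow> q x = 0"
  shows "(LBINT x. (if x < s then A else B) * q x)
     = A * integral {-K..0} (\<lambda>y. q (y + s)) + B * integral {0..K} (\<lambda>y. q (y + s))"
proof -
  define f where "f = (\<lambda>y. (if y < 0 then A else B) * q (y + s))"
  have shift: "(LBINT x. (if x < s then A else B) * q x) = (LBINT y. f y)"
    using lborel_integral_real_affine[where c=1 and t=s, of "\<lambda>x. (if x < s then A else B) * q x"]
    by (simp add: f_def add.commute)
  have cq: "continuous_on UNIV (\<lambda>y. q (y + s))"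
    by (intro continuous_on_compose2[OF cont] continuous_intros) auto
  have qm: "(\<lambda>y. q (y + s)) \<in> borel_measurable borel"
    by (rule borel_measurable_continuous_onI[OF cq])
  have meas: "f \<in> borel_measurable lborel"
    unfolding f_def using qm by measurable
  have "compact ((\<lambda>y. q (y + s)) ` {-K..K})"
    by (rule compact_continuous_image) (use cq continuous_on_subset in auto)
  then obtain C where C: "\<And>y. y \<in> {-K..K} \<Longrightarrow> \<bar>q (y + s)\<bar> \<le> C"
    using compact_imp_bounded bounded_real by (metis image_eqI)
  have fz: "f y = 0" if "y \<notin> {-K..K}" for y
    using that van[of "y + s"] by (auto simp: f_def)
  have integ: "integrable lborel f"
  proof (rule integrableI_bounded_set[where A="{-K..K}" and B="(\<bar>A\<bar> + \<bar>B\<bar>) * C"])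
    show "AE x in lborel. x \<in> {-K..K} \<longrightarrow> norm (f x) \<le> (\<bar>A\<bar> + \<bar>B\<bar>) * C"
    proof (rule AE_I2, intro impI)
      fix x assume x: "x \<in> {-K..K}"
      have "norm (f x) \<le> (\<bar>A\<bar> + \<bar>B\<bar>) * \<bar>q (x + s)\<bar>"
        by (auto simp: f_def abs_mult intro: mult_right_mono)
      also have "\<dots> \<le> (\<bar>A\<bar> + \<bar>B\<bar>) * C" using C[OF x] by (intro mult_left_mono) auto
      finally show "norm (f x) \<le> (\<bar>A\<bar> + \<bar>B\<bar>) * C" .
    qed
  qed (use meas fz K in auto)
  have hk1: "((\<lambda>y. A * q (y + s)) has_integral A * integral {-K..0} (\<lambda>y. q (y + s))) {-K..0}"
    by (intro has_integral_mult_right integrable_integral integrable_continuous_interval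
        continuous_on_subset[OF cq]) auto
  have hk1': "(f has_integral A * integral {-K..0} (\<lambda>y. q (y + s))) {-K..0}"
    by (rule has_integral_spike_finite[where S="{0}", OF _ _ hk1]) (auto simp: f_def)
  have hk2: "((\<lambda>y. B * q (y + s)) has_integral B * integral {0..K} (\<lambda>y. q (y + s))) {0..K}"
    by (intro has_integral_mult_right integrable_integral integrable_continuous_interval
        continuous_on_subset[OF cq]) auto
  have hk2': "(f has_integral B * integral {0..K} (\<lambda>y. q (y + s))) {0..K}"
    by (rule has_integral_spike_finite[where S="{}", OF _ _ hk2]) (auto simp: f_def)
  have "(f has_integral (A * integral {-K..0} (\<lambda>y. q (y + s)) + B * integral {0..K} (\<lambda>y. q (y + s)))) {-K..K}"
    by (rule has_integral_combine[OF _ _ hk1' hk2']) (use K in auto)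
  then have "(f has_integral (A * integral {-K..0} (\<lambda>y. q (y + s)) + B * integral {0..K} (\<lambda>y. q (y + s)))) UNIV"
    by (rule has_integral_on_superset) (use fz in auto)
  moreover have "(f has_integral (LBINT y. f y)) UNIV"
    by (rule has_integral_integral_lborel[OF integ])
  ultimately show ?thesis using shift has_integral_unique by metis
qed




lemma ftc_x:
  fixes \<psi> fx ft :: "real \<times> real \<Rightarrow> real"
  assumes deriv: "\<And>p. (\<psi> has_derivative (\<lambda>h. fx p * fst h + ft p * snd h)) (at p)"
    and ab: "a \<le> b"
  shows "integral {a..b} (\<lambda>y. fx (y + s, t)) = \<psi> (b + s, t) - \<psi> (a + s, t)"
proof -
  have "((\<lambda>y. fx (y + s, t)) has_integral (\<psi> (b + s, t) - \<psi> (a + s, t))) {a..b}"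
  proof (rule fundamental_theorem_of_calculus[OF ab, where f="\<lambda>y. \<psi> (y + s, t)"])
    fix y assume "y \<in> {a..b}"
    have "((\<lambda>y. \<psi> (y + s, t)) has_real_derivative (fx (y + s, t) * 1 + ft (y + s, t) * 0)) (at y within {a..b})"
      by (rule chain2[where X="\<lambda>y. y + s" and Y="\<lambda>y. t" and fx=fx and ft=ft], rule deriv)
         (auto intro!: derivative_eq_intros)
    then show "((\<lambda>y. \<psi> (y + s, t)) has_vector_derivative fx (y + s, t)) (at y within {a..b})"
      by (simp add: has_real_derivative_iff_has_vector_derivative)
  qed
  then show ?thesis by (rule integral_unique)
qed

lemma cont_of_deriv:
  fixes \<psi> fx ft :: "real \<times> real \<Rightarrow> real"
  assumes deriv: "\<And>p. (\<psi> has_derivative (\<lambda>h. fx p * fst h + ft p * snd h)) (at p)"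
  shows "continuous_on UNIV \<psi>"
  using deriv has_derivative_continuous continuous_at_imp_continuous_on by blast

lemma cont_of_DERIV:
  assumes "\<And>t. t \<in> S \<Longrightarrow> (f has_real_derivative f' t) (at t within S)"
  shows "continuous_on S f"
  using assms DERIV_continuous continuous_on_eq_continuous_within by blast

lemma key:
  fixes \<psi> fx ft :: "real \<times> real \<Rightarrow> real" and \<xi> \<sigma> c c' :: "real \<Rightarrow> real"
  assumes deriv: "\<And>p. (\<psi> has_derivative (\<lambda>h. fx p * fst h + ft p * snd h)) (at p)"
    and cfx: "continuous_on UNIV fx" and cft: "continuous_on UNIV ft"
    and T: "0 \<le> T" and ab: "a \<le> b"
    and \<xi>d: "\<And>t. t \<in> {0..T} \<Longrightarrow> (\<xi> has_real_derivative \<sigma> t) (at t within {0..T})"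
    and \<sigma>c: "continuous_on {0..T} \<sigma>"
    and cd: "\<And>t. t \<in> {0..T} \<Longrightarrow> (c has_real_derivative c' t) (at t within {0..T})"
    and c'c: "continuous_on {0..T} c'"
    and \<xi>0: "\<xi> 0 = 0" and vT: "\<And>y. \<psi> (y + \<xi> T, T) = 0"
  shows "integral {0..T} (\<lambda>t. c t * integral {a..b} (\<lambda>y. ft (y + \<xi> t, t)))
     = - c 0 * integral {a..b} (\<lambda>y. \<psi> (y, 0))
       - integral {0..T} (\<lambda>t. c' t * integral {a..b} (\<lambda>y. \<psi> (y + \<xi> t, t)))
       - integral {0..T} (\<lambda>t. c t * \<sigma> t * (\<psi> (b + \<xi> t, t) - \<psi> (a + \<xi> t, t)))"
proof -
  have c\<psi>: "continuous_on UNIV \<psi>" by (rule cont_of_deriv[OF deriv])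
  have \<xi>c: "continuous_on {0..T} \<xi>" by (rule cont_of_DERIV[OF \<xi>d])
  have cc: "continuous_on {0..T} c" by (rule cont_of_DERIV[OF cd])
  note [continuous_intros] = continuous_on_compose2[OF c\<psi>] continuous_on_compose2[OF cfx]
    continuous_on_compose2[OF cft] continuous_on_compose2[OF \<xi>c] continuous_on_compose2[OF \<sigma>c]
    continuous_on_compose2[OF cc] continuous_on_compose2[OF c'c]
  define D where "D y t = c' t * \<psi> (y + \<xi> t, t) + c t * (fx (y + \<xi> t, t) * \<sigma> t + ft (y + \<xi> t, t))" for y t
  have dD: "((\<lambda>t. c t * \<psi> (y + \<xi> t, t)) has_real_derivative D y t) (at t within {0..T})"
    if t: "t \<in> {0..T}" for y t
  proof -
    have "((\<lambda>t. \<psi> (y + \<xi> t, t)) has_real_derivative (fx (y + \<xi> t, t) * \<sigma> t + ft (y + \<xi> t, t) * 1)) (at t within {0..T})"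
      by (rule chain2[where X="\<lambda>t. y + \<xi> t" and Y="\<lambda>t. t" and fx=fx and ft=ft], rule deriv)
         (auto intro!: derivative_eq_intros \<xi>d t)
    from DERIV_mult[OF cd[OF t] this] show ?thesis
      by (rule DERIV_cong) (simp add: D_def algebra_simps)
  qed
  have ftcT: "((\<lambda>t. D y t) has_integral (- c 0 * \<psi> (y, 0))) {0..T}" for y
  proof -
    have "((\<lambda>t. D y t) has_integral (c T * \<psi> (y + \<xi> T, T) - c 0 * \<psi> (y + \<xi> 0, 0))) {0..T}"
      by (rule fundamental_theorem_of_calculus[OF T])
         (use dD in \<open>simp add: has_real_derivative_iff_has_vector_derivative\<close>)
    then show ?thesis using vT \<xi>0 by simp
  qed
  have Dcont: "continuous_on (cbox (a,0) (b,T)) (\<lambda>(y,t). D y t)"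
    unfolding cbox_Pair_eq D_def split_beta
    by (intro continuous_intros) (auto simp: cbox_interval)
  have swap: "integral {a..b} (\<lambda>y. integral {0..T} (D y)) = integral {0..T} (\<lambda>t. integral {a..b} (\<lambda>y. D y t))"
    using integral_swap_continuous[OF Dcont] by (simp add: cbox_interval)
  have lhs: "integral {a..b} (\<lambda>y. integral {0..T} (D y)) = - c 0 * integral {a..b} (\<lambda>y. \<psi> (y, 0))"
  proof -
    have "integral {a..b} (\<lambda>y. integral {0..T} (D y)) = integral {a..b} (\<lambda>y. - c 0 * \<psi> (y, 0))"
      by (rule integral_cong) (use ftcT integral_unique in blast)
    then show ?thesis by simp
  qed
  define PI where "PI t = integral {a..b} (\<lambda>y. \<psi> (y + \<xi> t, t))" for t
  define FI where "FI t = integral {a..b} (\<lambda>y. ft (y + \<xi> t, t))" for t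
  define DL where "DL t = \<psi> (b + \<xi> t, t) - \<psi> (a + \<xi> t, t)" for t
  have inner: "integral {a..b} (\<lambda>y. D y t) = c' t * PI t + c t * (\<sigma> t * DL t + FI t)"
    if t: "t \<in> {0..T}" for t
  proof -
    have i1: "(\<lambda>y. \<psi> (y + \<xi> t, t)) integrable_on {a..b}"
      by (intro integrable_continuous_interval continuous_intros) auto
    have i2: "(\<lambda>y. fx (y + \<xi> t, t)) integrable_on {a..b}"
      by (intro integrable_continuous_interval continuous_intros) auto
    have i3: "(\<lambda>y. ft (y + \<xi> t, t)) integrable_on {a..b}"
      by (intro integrable_continuous_interval continuous_intros) auto
    have "((\<lambda>y. D y t) has_integral (c' t * PI t + c t * (integral {a..b} (\<lambda>y. fx (y + \<xi> t, t)) * \<sigma> t + FI t))) {a..b}"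
      unfolding D_def PI_def FI_def
      by (intro has_integral_add has_integral_mult_right has_integral_mult_left integrable_integral i1 i2 i3)
    then show ?thesis
      using ftc_x[OF deriv ab, of "\<xi> t" t] by (simp add: DL_def integral_unique mult.commute)
  qed
  have cPI: "continuous_on {0..T} PI"
  proof -
    have "continuous_on ({0..T} \<times> cbox a b) (\<lambda>(t, y). \<psi> (y + \<xi> t, t))"
      unfolding split_beta by (intro continuous_intros) auto
    from integral_continuous_on_param[OF this] show ?thesis
      unfolding PI_def by (simp add: cbox_interval)
  qed
  have cFI: "continuous_on {0..T} FI"
  proof -
    have "continuous_on ({0..T} \<times> cbox a b) (\<lambda>(t, y). ft (y + \<xi> t, t))"
      unfolding split_beta by (intro continuous_intros) auto
    from integral_continuous_on_param[OF this] show ?thesis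
      unfolding FI_def by (simp add: cbox_interval)
  qed
  have cDL: "continuous_on {0..T} DL"
    unfolding DL_def by (intro continuous_intros) auto
  have "integral {0..T} (\<lambda>t. integral {a..b} (\<lambda>y. D y t))
      = integral {0..T} (\<lambda>t. c' t * PI t + c t * \<sigma> t * DL t + c t * FI t)"
    by (rule integral_cong) (simp add: inner algebra_simps)
  also have "\<dots> = integral {0..T} (\<lambda>t. c' t * PI t) + integral {0..T} (\<lambda>t. c t * \<sigma> t * DL t)
      + integral {0..T} (\<lambda>t. c t * FI t)"
    by (subst integral_add, (intro integrable_continuous_interval continuous_intros cPI cFI cDL cc \<sigma>c c'c)+)+ simp
  finally show ?thesis using swap lhs
    unfolding PI_def FI_def DL_def by (simp add: algebra_simps)
qed




lemma zero_deriv_open: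
  fixes f :: "real \<Rightarrow> real"
  assumes "(f has_real_derivative D) (at a)" "open S" "a \<in> S" "\<And>x. x \<in> S \<Longrightarrow> f x = 0"
  shows "D = 0"
proof -
  have "((\<lambda>_. 0) has_real_derivative D) (at a)"
    by (rule has_field_derivative_transform_within_open[OF assms(1-3)]) (use assms(4) in auto)
  then show ?thesis using DERIV_const DERIV_unique by blast
qed

context
  fixes \<psi> fx ft :: "real \<times> real \<Rightarrow> real" and R :: real
  assumes deriv: "\<And>p. (\<psi> has_derivative (\<lambda>h. fx p * fst h + ft p * snd h)) (at p)"
    and cfx: "continuous_on UNIV fx" and cft: "continuous_on UNIV ft"
    and supp: "\<And>x t. t \<ge> 0 \<Longrightarrow> \<bar>x\<bar> > R \<or> t > R \<Longrightarrow> \<psi> (x, t) = 0"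
begin

lemma dx: "((\<lambda>y. \<psi> (y, t)) has_real_derivative fx (x, t)) (at x)"
proof -
  have "((\<lambda>y. \<psi> (y, t)) has_real_derivative fx (x, t) * 1 + ft (x, t) * 0) (at x within UNIV)"
    by (rule chain2[where X="\<lambda>y. y" and Y="\<lambda>y. t" and fx=fx and ft=ft], rule deriv)
       (auto intro!: derivative_eq_intros)
  then show ?thesis by simp
qed

lemma dt: "((\<lambda>s. \<psi> (x, s)) has_real_derivative ft (x, t)) (at t)"
proof -
  have "((\<lambda>s. \<psi> (x, s)) has_real_derivative fx (x, t) * 0 + ft (x, t) * 1) (at t within UNIV)"
    by (rule chain2[where X="\<lambda>y. x" and Y="\<lambda>y. y" and fx=fx and ft=ft], rule deriv)
       (auto intro!: derivative_eq_intros)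
  then show ?thesis by simp
qed

lemma px_eq: "px \<psi> x t = fx (x, t)"
  unfolding px_def by (rule DERIV_imp_deriv[OF dx])

lemma pt_eq: "pt \<psi> x t = ft (x, t)"
  unfolding pt_def by (rule DERIV_imp_deriv[OF dt])

lemma fx_van: assumes "t \<ge> 0" "\<bar>x\<bar> > R \<or> t > R" shows "fx (x, t) = 0"
proof (cases "\<bar>x\<bar> > R")
  case True
  show ?thesis
  proof (rule zero_deriv_open[OF dx, of "{y. R < \<bar>y\<bar>}"])
    show "open {y::real. R < \<bar>y\<bar>}" by (intro open_Collect_less continuous_intros)
  qed (use True assms supp in auto)
next
  case False
  then have "t > R" using assms by auto
  show ?thesis
    by (rule zero_deriv_open[OF dx, of UNIV]) (use \<open>t > R\<close> assms supp in auto)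
qed

lemma ft_van_pos: assumes "t > 0" "\<bar>x\<bar> > R \<or> t > R" shows "ft (x, t) = 0"
proof (cases "\<bar>x\<bar> > R")
  case True
  show ?thesis
  proof (rule zero_deriv_open[OF dt, of "{s. 0 < s}"])
    show "open {s::real. 0 < s}" by (intro open_Collect_less continuous_intros)
  qed (use True assms supp in auto)
next
  case False
  then have "t > R" using assms by auto
  show ?thesis
  proof (rule zero_deriv_open[OF dt, of "{s. max 0 R < s}"])
    show "open {s::real. max 0 R < s}" by (intro open_Collect_less continuous_intros)
  qed (use \<open>t > R\<close> assms supp in auto)
qed

lemma ft_van: assumes "t \<ge> 0" "\<bar>x\<bar> > R \<or> t > R" shows "ft (x, t) = 0"
proof (cases "t > 0")
  case True then show ?thesis using ft_van_pos assms by blast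
next
  case False
  then have t0: "t = 0" using assms by auto
  have ev: "eventually (\<lambda>s. ft (x, s) = 0) (at_right 0)"
    by (rule eventually_at_rightI[of 0 1]) (use ft_van_pos assms t0 in auto)
  have c: "isCont (\<lambda>s. ft (x, s)) 0"
    by (intro continuous_at_compose[of 0 "\<lambda>s. (x, s)" ft, unfolded o_def] continuous_intros)
       (use cft continuous_on_eq_continuous_at in auto)
  have l1: "((\<lambda>s. ft (x, s)) \<longlongrightarrow> ft (x, 0)) (at_right 0)"
    using c unfolding isCont_def by (rule tendsto_mono[rotated]) (simp add: at_le)
  have l2: "((\<lambda>s. ft (x, s)) \<longlongrightarrow> 0) (at_right 0)"
    by (rule tendsto_eventually[OF ev])
  from tendsto_unique[OF _ l1 l2] show ?thesis using t0 by simp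
qed

end



lemma byparts:
  fixes \<psi> fx ft :: "real \<times> real \<Rightarrow> real" and \<xi> \<sigma> w w' :: "real \<Rightarrow> real"
  assumes deriv: "\<And>p. (\<psi> has_derivative (\<lambda>h. fx p * fst h + ft p * snd h)) (at p)"
    and cfx: "continuous_on UNIV fx" and cft: "continuous_on UNIV ft"
    and T: "0 \<le> T"
    and \<xi>d: "\<And>t. t \<in> {0..T} \<Longrightarrow> (\<xi> has_real_derivative \<sigma> t) (at t within {0..T})"
    and \<sigma>c: "continuous_on {0..T} \<sigma>"
    and wd: "\<And>t. t \<in> {0..T} \<Longrightarrow> (w has_real_derivative w' t) (at t within {0..T})"
    and w'c: "continuous_on {0..T} w'"
    and w0: "w 0 = 0" and vT: "\<psi> (\<xi> T, T) = 0"
  shows "integral {0..T} (\<lambda>t. w t * ft (\<xi> t, t)) + integral {0..T} (\<lambda>t. w t * \<sigma> t * fx (\<xi> t, t))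
     = - integral {0..T} (\<lambda>t. w' t * \<psi> (\<xi> t, t))"
proof -
  have c\<psi>: "continuous_on UNIV \<psi>" by (rule cont_of_deriv[OF deriv])
  have \<xi>c: "continuous_on {0..T} \<xi>" by (rule cont_of_DERIV[OF \<xi>d])
  have wc: "continuous_on {0..T} w" by (rule cont_of_DERIV[OF wd])
  note [continuous_intros] = continuous_on_compose2[OF c\<psi>] continuous_on_compose2[OF cfx]
    continuous_on_compose2[OF cft] continuous_on_compose2[OF \<xi>c] continuous_on_compose2[OF \<sigma>c]
    continuous_on_compose2[OF wc] continuous_on_compose2[OF w'c]
  define D where "D t = w' t * \<psi> (\<xi> t, t) + w t * (fx (\<xi> t, t) * \<sigma> t + ft (\<xi> t, t))" for t
  have dD: "((\<lambda>t. w t * \<psi> (\<xi> t, t)) has_real_derivative D t) (at t within {0..T})"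
    if t: "t \<in> {0..T}" for t
  proof -
    have "((\<lambda>t. \<psi> (\<xi> t, t)) has_real_derivative (fx (\<xi> t, t) * \<sigma> t + ft (\<xi> t, t) * 1)) (at t within {0..T})"
      by (rule chain2[where X="\<lambda>t. \<xi> t" and Y="\<lambda>t. t" and fx=fx and ft=ft], rule deriv)
         (auto intro!: derivative_eq_intros \<xi>d t)
    from DERIV_mult[OF wd[OF t] this] show ?thesis
      by (rule DERIV_cong) (simp add: D_def algebra_simps)
  qed
  have "(D has_integral (w T * \<psi> (\<xi> T, T) - w 0 * \<psi> (\<xi> 0, 0))) {0..T}"
    by (rule fundamental_theorem_of_calculus[OF T])
       (use dD in \<open>simp add: has_real_derivative_iff_has_vector_derivative\<close>)
  then have I0: "integral {0..T} D = 0" using vT w0 by (simp add: integral_unique)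
  have c1: "continuous_on {0..T} (\<lambda>t. \<psi> (\<xi> t, t))" by (intro continuous_intros) auto
  have c2: "continuous_on {0..T} (\<lambda>t. fx (\<xi> t, t))" by (intro continuous_intros) auto
  have c3: "continuous_on {0..T} (\<lambda>t. ft (\<xi> t, t))" by (intro continuous_intros) auto
  have "integral {0..T} D = integral {0..T} (\<lambda>t. w' t * \<psi> (\<xi> t, t) + (w t * \<sigma> t * fx (\<xi> t, t) + w t * ft (\<xi> t, t)))"
    by (rule integral_cong) (simp add: D_def algebra_simps)
  also have "\<dots> = integral {0..T} (\<lambda>t. w' t * \<psi> (\<xi> t, t))
      + (integral {0..T} (\<lambda>t. w t * \<sigma> t * fx (\<xi> t, t)) + integral {0..T} (\<lambda>t. w t * ft (\<xi> t, t)))"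
    by (subst integral_add, (intro integrable_continuous_interval continuous_on_add continuous_on_mult c1 c2 c3 wc w'c \<sigma>c)+)+ simp
  finally show ?thesis using I0 by linarith
qed

lemma key_L:
  fixes \<psi> fx ft :: "real \<times> real \<Rightarrow> real" and \<xi> \<sigma> c c' :: "real \<Rightarrow> real"
  assumes deriv: "\<And>p. (\<psi> has_derivative (\<lambda>h. fx p * fst h + ft p * snd h)) (at p)"
    and cfx: "continuous_on UNIV fx" and cft: "continuous_on UNIV ft"
    and T: "0 \<le> T" and K: "0 \<le> K"
    and \<xi>d: "\<And>t. t \<in> {0..T} \<Longrightarrow> (\<xi> has_real_derivative \<sigma> t) (at t within {0..T})"
    and \<sigma>c: "continuous_on {0..T} \<sigma>"
    and cd: "\<And>t. t \<in> {0..T} \<Longrightarrow> (c has_real_derivative c' t) (at t within {0..T})"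
    and c'c: "continuous_on {0..T} c'"
    and \<xi>0: "\<xi> 0 = 0" and vT: "\<And>y. \<psi> (y, T) = 0"
    and va: "\<And>t. t \<in> {0..T} \<Longrightarrow> \<psi> (- K + \<xi> t, t) = 0"
  shows "integral {0..T} (\<lambda>t. c t * integral {-K..0} (\<lambda>y. ft (y + \<xi> t, t)))
     = - c 0 * integral {-K..0} (\<lambda>y. \<psi> (y, 0))
       - integral {0..T} (\<lambda>t. c' t * integral {-K..0} (\<lambda>y. \<psi> (y + \<xi> t, t)))
       - integral {0..T} (\<lambda>t. c t * \<sigma> t * \<psi> (\<xi> t, t))"
proof -
  have "integral {0..T} (\<lambda>t. c t * \<sigma> t * (\<psi> (0 + \<xi> t, t) - \<psi> (- K + \<xi> t, t)))
      = integral {0..T} (\<lambda>t. c t * \<sigma> t * \<psi> (\<xi> t, t))"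
  proof (rule integral_cong)
    fix t assume t: "t \<in> {0..T}"
    have "\<psi> (\<xi> t - K, t) = 0" using va[OF t] by (metis diff_conv_add_uminus add.commute)
    then show "c t * \<sigma> t * (\<psi> (0 + \<xi> t, t) - \<psi> (- K + \<xi> t, t)) = c t * \<sigma> t * \<psi> (\<xi> t, t)"
      by simp
  qed
  with key[OF deriv cfx cft T _ \<xi>d \<sigma>c cd c'c \<xi>0, of "-K" 0] K vT show ?thesis by simp
qed

lemma key_R:
  fixes \<psi> fx ft :: "real \<times> real \<Rightarrow> real" and \<xi> \<sigma> c c' :: "real \<Rightarrow> real"
  assumes deriv: "\<And>p. (\<psi> has_derivative (\<lambda>h. fx p * fst h + ft p * snd h)) (at p)"
    and cfx: "continuous_on UNIV fx" and cft: "continuous_on UNIV ft"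
    and T: "0 \<le> T" and K: "0 \<le> K"
    and \<xi>d: "\<And>t. t \<in> {0..T} \<Longrightarrow> (\<xi> has_real_derivative \<sigma> t) (at t within {0..T})"
    and \<sigma>c: "continuous_on {0..T} \<sigma>"
    and cd: "\<And>t. t \<in> {0..T} \<Longrightarrow> (c has_real_derivative c' t) (at t within {0..T})"
    and c'c: "continuous_on {0..T} c'"
    and \<xi>0: "\<xi> 0 = 0" and vT: "\<And>y. \<psi> (y, T) = 0"
    and vb: "\<And>t. t \<in> {0..T} \<Longrightarrow> \<psi> (K + \<xi> t, t) = 0"
  shows "integral {0..T} (\<lambda>t. c t * integral {0..K} (\<lambda>y. ft (y + \<xi> t, t)))
     = - c 0 * integral {0..K} (\<lambda>y. \<psi> (y, 0))
       - integral {0..T} (\<lambda>t. c' t * integral {0..K} (\<lambda>y. \<psi> (y + \<xi> t, t)))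
       + integral {0..T} (\<lambda>t. c t * \<sigma> t * \<psi> (\<xi> t, t))"
proof -
  have "integral {0..T} (\<lambda>t. c t * \<sigma> t * (\<psi> (K + \<xi> t, t) - \<psi> (0 + \<xi> t, t)))
      = integral {0..T} (\<lambda>t. - (c t * \<sigma> t * \<psi> (\<xi> t, t)))"
    by (rule integral_cong) (simp add: vb)
  with key[OF deriv cfx cft T _ \<xi>d \<sigma>c cd c'c \<xi>0, of 0 K] K vT show ?thesis by simp
qed




lemma lin4:
  fixes fa fb fc fd :: "real \<Rightarrow> real"
  assumes "continuous_on {a..b} fa" "continuous_on {a..b} fb" "continuous_on {a..b} fc" "continuous_on {a..b} fd"
    and "\<And>t. t \<in> {a..b} \<Longrightarrow> fa t + fb t + fc t + fd t = 0"
  shows "integral {a..b} fa + integral {a..b} fb + integral {a..b} fc + integral {a..b} fd = 0"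
proof -
  have h: "(f \<in> {fa,fb,fc,fd}) \<Longrightarrow> (f has_integral integral {a..b} f) {a..b}" for f
    using assms(1-4) by (auto intro!: integrable_integral integrable_continuous_interval)
  have "((\<lambda>t. fa t + fb t + fc t + fd t) has_integral
      (integral {a..b} fa + integral {a..b} fb + integral {a..b} fc + integral {a..b} fd)) {a..b}"
    by (intro has_integral_add h) auto
  then have "((\<lambda>t. 0) has_integral
      (integral {a..b} fa + integral {a..b} fb + integral {a..b} fc + integral {a..b} fd)) {a..b}"
    by (rule has_integral_spike_finite[where S="{}", rotated 2]) (use assms(5) in auto)
  then show ?thesis using has_integral_0 has_integral_unique by metis
qed

lemma lin5:
  fixes fa fb fc fd fe :: "real \<Rightarrow> real"
  assumes "continuous_on {a..b} fa" "continuous_on {a..b} fb" "continuous_on {a..b} fc" "continuous_on {a..b} fd"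
    "continuous_on {a..b} fe"
    and "\<And>t. t \<in> {a..b} \<Longrightarrow> fa t + fb t + fc t + fd t + fe t = 0"
  shows "integral {a..b} fa + integral {a..b} fb + integral {a..b} fc + integral {a..b} fd + integral {a..b} fe = 0"
proof -
  have h: "(f \<in> {fa,fb,fc,fd,fe}) \<Longrightarrow> (f has_integral integral {a..b} f) {a..b}" for f
    using assms(1-5) by (auto intro!: integrable_integral integrable_continuous_interval)
  have "((\<lambda>t. fa t + fb t + fc t + fd t + fe t) has_integral
      (integral {a..b} fa + integral {a..b} fb + integral {a..b} fc + integral {a..b} fd + integral {a..b} fe)) {a..b}"
    by (intro has_integral_add h) auto
  then have "((\<lambda>t. 0) has_integral
      (integral {a..b} fa + integral {a..b} fb + integral {a..b} fc + integral {a..b} fd + integral {a..b} fe)) {a..b}"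
    by (rule has_integral_spike_finite[where S="{}", rotated 2]) (use assms(6) in auto)
  then show ?thesis using has_integral_0 has_integral_unique by metis
qed

locale rh =
  fixes \<psi> fx ft :: "real \<times> real \<Rightarrow> real" and R :: real
    and \<sigma> \<omega> \<xi> ul ur :: "real \<Rightarrow> real" and \<mu> ua am ap um up T M K :: real
  assumes deriv: "\<And>p. (\<psi> has_derivative (\<lambda>h. fx p * fst h + ft p * snd h)) (at p)"
    and cfx: "continuous_on UNIV fx" and cft: "continuous_on UNIV ft"
    and supp: "\<And>x t. t \<ge> 0 \<Longrightarrow> \<bar>x\<bar> > R \<or> t > R \<Longrightarrow> \<psi> (x, t) = 0"
    and \<sigma>c: "continuous_on {0..} \<sigma>"
    and \<xi>_def: "\<And>t. \<xi> t = (LBINT s:{0..t}. \<sigma> s)"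
    and ul_def: "\<And>t. ul t = ua + (um - ua) * exp (- \<mu> * t)"
    and ur_def: "\<And>t. ur t = ua + (up - ua) * exp (- \<mu> * t)"
    and RH1: "\<And>t. t \<ge> 0 \<Longrightarrow> (\<omega> has_real_derivative ((ap - am) * \<sigma> t - (ap * ur t - am * ul t))) (at t within {0..})"
    and RH2: "\<And>t. t \<ge> 0 \<Longrightarrow> ((\<lambda>s. \<omega> s * \<sigma> s) has_real_derivative
         ((ap * ur t - am * ul t) * \<sigma> t - (ap * (ur t)\<^sup>2 - am * (ul t)\<^sup>2) + \<mu> * (ua - \<sigma> t) * \<omega> t)) (at t within {0..})"
    and \<omega>0: "\<omega> 0 = 0"
    and T_def: "T = \<bar>R\<bar> + 1"
    and Mb: "\<And>t. t \<in> {0..T} \<Longrightarrow> \<bar>\<xi> t\<bar> \<le> M" and M0: "0 \<le> M"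
    and K_def: "K = \<bar>R\<bar> + M + 1"
begin

lemma T0: "0 \<le> T" and TR: "R < T" and K0: "0 < K"
  using T_def K_def M0 by auto

lemma \<sigma>cT: "continuous_on {0..T} \<sigma>"
  by (rule continuous_on_subset[OF \<sigma>c]) auto

lemma \<xi>_int: "t \<ge> 0 \<Longrightarrow> \<xi> t = integral {0..t} \<sigma>"
  unfolding \<xi>_def
  by (rule set_borel_integral_eq_integral(2)[OF borel_integrable_atLeastAtMost'[OF continuous_on_subset[OF \<sigma>c]]]) auto

lemma \<xi>0: "\<xi> 0 = 0"
  using \<xi>_int[of 0] by simp

lemma \<xi>d: "t \<in> {0..T} \<Longrightarrow> (\<xi> has_real_derivative \<sigma> t) (at t within {0..T})"
proof -
  assume t: "t \<in> {0..T}"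
  have "((\<lambda>u. integral {0..u} \<sigma>) has_real_derivative \<sigma> t) (at t within {0..T})"
    using integral_has_vector_derivative[OF \<sigma>cT t]
    by (simp add: has_real_derivative_iff_has_vector_derivative)
  then show ?thesis
    by (rule has_field_derivative_transform_within[OF _ zero_less_one t]) (auto simp: \<xi>_int)
qed

lemma \<xi>cT: "continuous_on {0..T} \<xi>"
  by (rule cont_of_DERIV[OF \<xi>d])

lemma c\<psi>: "continuous_on UNIV \<psi>" by (rule cont_of_deriv[OF deriv])

lemma \<omega>d: "t \<in> {0..T} \<Longrightarrow> (\<omega> has_real_derivative ((ap - am) * \<sigma> t - (ap * ur t - am * ul t))) (at t within {0..T})"
  by (rule DERIV_subset[OF RH1]) auto

lemma \<omega>\<sigma>d: "t \<in> {0..T} \<Longrightarrow> ((\<lambda>s. \<omega> s * \<sigma> s) has_real_derivative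
         ((ap * ur t - am * ul t) * \<sigma> t - (ap * (ur t)\<^sup>2 - am * (ul t)\<^sup>2) + \<mu> * (ua - \<sigma> t) * \<omega> t)) (at t within {0..T})"
  by (rule DERIV_subset[OF RH2]) auto

lemma \<omega>cT: "continuous_on {0..T} \<omega>"
  by (rule cont_of_DERIV[OF \<omega>d])

lemma ulc: "continuous_on {0..T} ul" and urc: "continuous_on {0..T} ur"
  unfolding ul_def[abs_def] ur_def[abs_def] by (intro continuous_intros)+

lemma uld: "(ul has_real_derivative (\<mu> * (ua - ul t))) (at t within S)"
  unfolding ul_def[abs_def]
  by (rule DERIV_cong, (rule derivative_eq_intros refl)+) (simp add: ul_def algebra_simps)

lemma urd: "(ur has_real_derivative (\<mu> * (ua - ur t))) (at t within S)"
  unfolding ur_def[abs_def]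
  by (rule DERIV_cong, (rule derivative_eq_intros refl)+) (simp add: ur_def algebra_simps)

lemmas cI[continuous_intros] = continuous_on_compose2[OF c\<psi>] continuous_on_compose2[OF cfx]
    continuous_on_compose2[OF cft] continuous_on_compose2[OF \<xi>cT] continuous_on_compose2[OF \<sigma>cT]
    continuous_on_compose2[OF \<omega>cT] continuous_on_compose2[OF ulc] continuous_on_compose2[OF urc]

lemma far: "t \<in> {0..T} \<Longrightarrow> K \<le> \<bar>x - \<xi> t\<bar> \<Longrightarrow> R < \<bar>x\<bar>"
  using Mb[of t] K_def by auto

lemma vL: "t \<in> {0..T} \<Longrightarrow> \<psi> (- K + \<xi> t, t) = 0"
  using far[of t "- K + \<xi> t"] supp[of t "- K + \<xi> t"] K0 by auto

lemma vR: "t \<in> {0..T} \<Longrightarrow> \<psi> (K + \<xi> t, t) = 0"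
  using far[of t "K + \<xi> t"] supp[of t "K + \<xi> t"] K0 by auto

lemma vT: "\<psi> (y, T) = 0"
  using supp TR T0 by auto

lemma inner_gen:
  fixes A B :: real and q :: "real \<Rightarrow> real"
  assumes t: "t \<in> {0..T}" and q: "continuous_on UNIV q" and qv: "\<And>x. R < \<bar>x\<bar> \<Longrightarrow> q x = 0"
  shows "(LBINT x. (if x < \<xi> t then A else B) * q x)
     = A * integral {-K..0} (\<lambda>y. q (y + \<xi> t)) + B * integral {0..K} (\<lambda>y. q (y + \<xi> t))"
  by (rule step_int[OF q K0]) (metis far[OF t] qv less_imp_le)

lemma ft0: "t \<ge> 0 \<Longrightarrow> \<bar>x\<bar> > R \<or> t > R \<Longrightarrow> ft (x, t) = 0"
  by (rule ft_van[OF deriv cfx cft supp])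

lemma fx0: "t \<ge> 0 \<Longrightarrow> \<bar>x\<bar> > R \<or> t > R \<Longrightarrow> fx (x, t) = 0"
  by (rule fx_van[OF deriv cfx cft supp])

lemma pxe: "px \<psi> x t = fx (x, t)"
  by (rule px_eq[OF deriv cfx cft supp])

lemma pte: "pt \<psi> x t = ft (x, t)"
  by (rule pt_eq[OF deriv cfx cft supp])

lemma contq: "continuous_on UNIV (\<lambda>x. \<psi> (x, t))" "continuous_on UNIV (\<lambda>x. fx (x, t))" "continuous_on UNIV (\<lambda>x. ft (x, t))"
  by (intro continuous_intros; auto)+

lemma outer_ft:
  assumes A: "continuous_on {0..T} A" and B: "continuous_on {0..T} B"
  shows "(LBINT t:{0..}. (LBINT x. (if x < \<xi> t then A t else B t) * ft (x, t)))
     = integral {0..T} (\<lambda>t. A t * integral {-K..0} (\<lambda>y. ft (y + \<xi> t, t)) + B t * integral {0..K} (\<lambda>y. ft (y + \<xi> t, t)))"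
proof (rule outer_int[OF T0])
  have "continuous_on ({0..T} \<times> cbox (-K) 0) (\<lambda>(t, y). ft (y + \<xi> t, t))"
    unfolding split_beta by (intro continuous_intros) auto
  from integral_continuous_on_param[OF this]
  have c1: "continuous_on {0..T} (\<lambda>t. integral {-K..0} (\<lambda>y. ft (y + \<xi> t, t)))" by (simp add: cbox_interval)
  have "continuous_on ({0..T} \<times> cbox 0 K) (\<lambda>(t, y). ft (y + \<xi> t, t))"
    unfolding split_beta by (intro continuous_intros) auto
  from integral_continuous_on_param[OF this]
  have c2: "continuous_on {0..T} (\<lambda>t. integral {0..K} (\<lambda>y. ft (y + \<xi> t, t)))" by (simp add: cbox_interval)
  show "continuous_on {0..T} (\<lambda>t. A t * integral {-K..0} (\<lambda>y. ft (y + \<xi> t, t)) + B t * integral {0..K} (\<lambda>y. ft (y + \<xi> t, t)))"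
    by (intro continuous_intros A B c1 c2)
  show "(LBINT x. (if x < \<xi> t then A t else B t) * ft (x, t))
     = A t * integral {-K..0} (\<lambda>y. ft (y + \<xi> t, t)) + B t * integral {0..K} (\<lambda>y. ft (y + \<xi> t, t))"
    if t: "t \<in> {0..T}" for t
    by (rule inner_gen[OF t contq(3)]) (use t ft0 in auto)
  show "(LBINT x. (if x < \<xi> t then A t else B t) * ft (x, t)) = 0" if "T < t" for t
    using that TR T0 ft0[of t] by simp
qed

lemma outer_psi:
  assumes A: "continuous_on {0..T} A" and B: "continuous_on {0..T} B"
  shows "(LBINT t:{0..}. (LBINT x. (if x < \<xi> t then A t else B t) * \<psi> (x, t)))
     = integral {0..T} (\<lambda>t. A t * integral {-K..0} (\<lambda>y. \<psi> (y + \<xi> t, t)) + B t * integral {0..K} (\<lambda>y. \<psi> (y + \<xi> t, t)))"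
proof (rule outer_int[OF T0])
  have "continuous_on ({0..T} \<times> cbox (-K) 0) (\<lambda>(t, y). \<psi> (y + \<xi> t, t))"
    unfolding split_beta by (intro continuous_intros) auto
  from integral_continuous_on_param[OF this]
  have c1: "continuous_on {0..T} (\<lambda>t. integral {-K..0} (\<lambda>y. \<psi> (y + \<xi> t, t)))" by (simp add: cbox_interval)
  have "continuous_on ({0..T} \<times> cbox 0 K) (\<lambda>(t, y). \<psi> (y + \<xi> t, t))"
    unfolding split_beta by (intro continuous_intros) auto
  from integral_continuous_on_param[OF this]
  have c2: "continuous_on {0..T} (\<lambda>t. integral {0..K} (\<lambda>y. \<psi> (y + \<xi> t, t)))" by (simp add: cbox_interval)
  show "continuous_on {0..T} (\<lambda>t. A t * integral {-K..0} (\<lambda>y. \<psi> (y + \<xi> t, t)) + B t * integral {0..K} (\<lambda>y. \<psi> (y + \<xi> t, t)))"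
    by (intro continuous_intros A B c1 c2)
  show "(LBINT x. (if x < \<xi> t then A t else B t) * \<psi> (x, t))
     = A t * integral {-K..0} (\<lambda>y. \<psi> (y + \<xi> t, t)) + B t * integral {0..K} (\<lambda>y. \<psi> (y + \<xi> t, t))"
    if t: "t \<in> {0..T}" for t
    by (rule inner_gen[OF t contq(1)]) (use t supp in auto)
  show "(LBINT x. (if x < \<xi> t then A t else B t) * \<psi> (x, t)) = 0" if "T < t" for t
    using that TR T0 supp[of t] by simp
qed

lemma outer_fx:
  assumes A: "continuous_on {0..T} A" and B: "continuous_on {0..T} B"
  shows "(LBINT t:{0..}. (LBINT x. (if x < \<xi> t then A t else B t) * fx (x, t)))
     = integral {0..T} (\<lambda>t. (A t - B t) * \<psi> (\<xi> t, t))"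
proof (rule outer_int[OF T0])
  show "continuous_on {0..T} (\<lambda>t. (A t - B t) * \<psi> (\<xi> t, t))"
    by (intro continuous_intros A B) auto
  show "(LBINT x. (if x < \<xi> t then A t else B t) * fx (x, t)) = (A t - B t) * \<psi> (\<xi> t, t)"
    if t: "t \<in> {0..T}" for t
  proof -
    have "(LBINT x. (if x < \<xi> t then A t else B t) * fx (x, t))
       = A t * integral {-K..0} (\<lambda>y. fx (y + \<xi> t, t)) + B t * integral {0..K} (\<lambda>y. fx (y + \<xi> t, t))"
      by (rule inner_gen[OF t contq(2)]) (use t fx0 in auto)
    also have "\<dots> = A t * (\<psi> (0 + \<xi> t, t) - \<psi> (- K + \<xi> t, t)) + B t * (\<psi> (K + \<xi> t, t) - \<psi> (0 + \<xi> t, t))"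
      using ftc_x[OF deriv, of "-K" 0 "\<xi> t" t] ftc_x[OF deriv, of 0 K "\<xi> t" t] K0 by simp
    also have "\<dots> = (A t - B t) * \<psi> (\<xi> t, t)"
      using vL[OF t] vR[OF t] by (simp add: algebra_simps)
    finally show ?thesis .
  qed
  show "(LBINT x. (if x < \<xi> t then A t else B t) * fx (x, t)) = 0" if "T < t" for t
    using that TR T0 fx0[of t] by simp
qed

lemma tint_eq:
  assumes "continuous_on {0..T} F" "\<And>t. T < t \<Longrightarrow> F t = 0"
  shows "tint F = integral {0..T} F"
  unfolding tint_def by (rule outer_int[OF T0 assms(1) _ assms(2)]) auto

lemma init_eq:
  fixes A B :: real
  shows "(LBINT x. (if x < 0 then A else B) * \<psi> (x, 0))
     = A * integral {-K..0} (\<lambda>y. \<psi> (y, 0)) + B * integral {0..K} (\<lambda>y. \<psi> (y, 0))"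
proof -
  have "(LBINT x. (if x < 0 then A else B) * \<psi> (x, 0)) = A * integral {-K..0} (\<lambda>y. \<psi> (y + 0, 0)) + B * integral {0..K} (\<lambda>y. \<psi> (y + 0, 0))"
    by (rule step_int[OF contq(1) K0]) (use M0 in \<open>auto intro!: supp simp: K_def\<close>)
  then show ?thesis by simp
qed

end



context rh begin

lemma K0': "0 \<le> K" using K0 by simp

lemma cI2: "continuous_on {0..T} (\<lambda>t. integral {a..b} (\<lambda>y. ft (y + \<xi> t, t)))"
  "continuous_on {0..T} (\<lambda>t. integral {a..b} (\<lambda>y. \<psi> (y + \<xi> t, t)))"
proof -
  have "continuous_on ({0..T} \<times> cbox a b) (\<lambda>(t, y). ft (y + \<xi> t, t))"
    unfolding split_beta by (intro continuous_intros) auto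
  from integral_continuous_on_param[OF this]
  show "continuous_on {0..T} (\<lambda>t. integral {a..b} (\<lambda>y. ft (y + \<xi> t, t)))" by (simp add: cbox_interval)
  have "continuous_on ({0..T} \<times> cbox a b) (\<lambda>(t, y). \<psi> (y + \<xi> t, t))"
    unfolding split_beta by (intro continuous_intros) auto
  from integral_continuous_on_param[OF this]
  show "continuous_on {0..T} (\<lambda>t. integral {a..b} (\<lambda>y. \<psi> (y + \<xi> t, t)))" by (simp add: cbox_interval)
qed

lemma c\<Psi>: "continuous_on {0..T} (\<lambda>t. \<psi> (\<xi> t, t))"
  "continuous_on {0..T} (\<lambda>t. fx (\<xi> t, t))" "continuous_on {0..T} (\<lambda>t. ft (\<xi> t, t))"
  by (intro continuous_intros; auto)+

lemma int_add2:
  fixes f g :: "real \<Rightarrow> real"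
  assumes "continuous_on {0..T} f" "continuous_on {0..T} g"
  shows "integral {0..T} (\<lambda>t. f t + g t) = integral {0..T} f + integral {0..T} g"
  using integrable_continuous_interval[OF assms(1)] integrable_continuous_interval[OF assms(2)] by (rule integral_add)

lemma eq1:
  "(dint (\<lambda>x t. (if x < \<xi> t then am else ap) * pt \<psi> x t) + tint (\<lambda>t. \<omega> t * pt \<psi> (\<xi> t) t))
   + (dint (\<lambda>x t. (if x < \<xi> t then am else ap) * (if x < \<xi> t then ul t else ur t) * px \<psi> x t)
      + tint (\<lambda>t. \<omega> t * \<sigma> t * px \<psi> (\<xi> t) t))
   = - (LBINT x. (if x < 0 then am else ap) * \<psi> (x, 0))"
proof -
  have d1: "dint (\<lambda>x t. (if x < \<xi> t then am else ap) * pt \<psi> x t)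
     = integral {0..T} (\<lambda>t. am * integral {-K..0} (\<lambda>y. ft (y + \<xi> t, t)))
       + integral {0..T} (\<lambda>t. ap * integral {0..K} (\<lambda>y. ft (y + \<xi> t, t)))"
  proof -
    have "dint (\<lambda>x t. (if x < \<xi> t then am else ap) * pt \<psi> x t)
       = integral {0..T} (\<lambda>t. am * integral {-K..0} (\<lambda>y. ft (y + \<xi> t, t)) + ap * integral {0..K} (\<lambda>y. ft (y + \<xi> t, t)))"
      unfolding dint_def pte using outer_ft[where A="\<lambda>_. am" and B="\<lambda>_. ap"] by simp
    also have "\<dots> = integral {0..T} (\<lambda>t. am * integral {-K..0} (\<lambda>y. ft (y + \<xi> t, t)))
       + integral {0..T} (\<lambda>t. ap * integral {0..K} (\<lambda>y. ft (y + \<xi> t, t)))"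
      by (rule int_add2; intro continuous_intros cI2)
    finally show ?thesis .
  qed
  note k1 = key_L[where c="\<lambda>_. am", OF deriv cfx cft T0 K0' \<xi>d \<sigma>cT DERIV_const continuous_on_const \<xi>0 vT vL]
  note k2 = key_R[where c="\<lambda>_. ap", OF deriv cfx cft T0 K0' \<xi>d \<sigma>cT DERIV_const continuous_on_const \<xi>0 vT vR]
  have eqx: "\<And>x t. (if x < \<xi> t then am else ap) * (if x < \<xi> t then ul t else ur t) * px \<psi> x t
      = (if x < \<xi> t then am * ul t else ap * ur t) * fx (x, t)"
    by (simp add: pxe)
  have d3: "dint (\<lambda>x t. (if x < \<xi> t then am else ap) * (if x < \<xi> t then ul t else ur t) * px \<psi> x t)
     = integral {0..T} (\<lambda>t. (am * ul t - ap * ur t) * \<psi> (\<xi> t, t))"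
    unfolding dint_def eqx
    by (rule outer_fx[where A="\<lambda>t. am * ul t" and B="\<lambda>t. ap * ur t", simplified]; intro continuous_intros ulc urc)
  have t2: "tint (\<lambda>t. \<omega> t * pt \<psi> (\<xi> t) t) = integral {0..T} (\<lambda>t. \<omega> t * ft (\<xi> t, t))"
    unfolding pte by (rule tint_eq) (use c\<Psi> TR T0 ft0 in \<open>auto intro!: continuous_intros \<omega>cT\<close>)
  have t4: "tint (\<lambda>t. \<omega> t * \<sigma> t * px \<psi> (\<xi> t) t) = integral {0..T} (\<lambda>t. \<omega> t * \<sigma> t * fx (\<xi> t, t))"
    unfolding pxe by (rule tint_eq) (use c\<Psi> TR T0 fx0 in \<open>auto intro!: continuous_intros \<omega>cT \<sigma>cT\<close>)
  note bp = byparts[OF deriv cfx cft T0 \<xi>d \<sigma>cT \<omega>d _ \<omega>0 vT]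
  have w'c: "continuous_on {0..T} (\<lambda>t. (ap - am) * \<sigma> t - (ap * ur t - am * ul t))"
    by (intro continuous_intros \<sigma>cT ulc urc)
  have l4: "integral {0..T} (\<lambda>t. - (am * \<sigma> t * \<psi> (\<xi> t, t))) + integral {0..T} (\<lambda>t. ap * \<sigma> t * \<psi> (\<xi> t, t))
      + integral {0..T} (\<lambda>t. (am * ul t - ap * ur t) * \<psi> (\<xi> t, t))
      + integral {0..T} (\<lambda>t. - (((ap - am) * \<sigma> t - (ap * ur t - am * ul t)) * \<psi> (\<xi> t, t))) = 0"
    by (rule lin4) (auto intro!: continuous_intros c\<Psi> w'c \<sigma>cT ulc urc simp: algebra_simps)
  then have l4': "- integral {0..T} (\<lambda>t. am * \<sigma> t * \<psi> (\<xi> t, t)) + integral {0..T} (\<lambda>t. ap * \<sigma> t * \<psi> (\<xi> t, t))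
      + integral {0..T} (\<lambda>t. (am * ul t - ap * ur t) * \<psi> (\<xi> t, t))
      + - integral {0..T} (\<lambda>t. ((ap - am) * \<sigma> t - (ap * ur t - am * ul t)) * \<psi> (\<xi> t, t)) = 0"
    by (simp only: integral_neg)
  have triv: "\<And>t. t \<in> {0..T} \<Longrightarrow> t \<in> {0..T}" by simp
  have z1: "integral {0..T} (\<lambda>t. 0 * integral {-K..0} (\<lambda>y. \<psi> (y + \<xi> t, t))) = 0" by simp
  have z2: "integral {0..T} (\<lambda>t. 0 * integral {0..K} (\<lambda>y. \<psi> (y + \<xi> t, t))) = 0" by simp
  show ?thesis
    using d1 k1 k2 d3 t2 t4 bp[OF triv triv w'c] l4' init_eq[of am ap] z1 z2 by linarith
qed

end



context rh begin

lemma eq2: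
  "(dint (\<lambda>x t. (if x < \<xi> t then am else ap) * (if x < \<xi> t then ul t else ur t) * pt \<psi> x t)
      + tint (\<lambda>t. \<omega> t * \<sigma> t * pt \<psi> (\<xi> t) t))
   + (dint (\<lambda>x t. (if x < \<xi> t then am else ap) * (if x < \<xi> t then ul t else ur t)\<^sup>2 * px \<psi> x t)
      + tint (\<lambda>t. \<sigma> t * \<omega> t * \<sigma> t * px \<psi> (\<xi> t) t))
   + \<mu> * (dint (\<lambda>x t. (if x < \<xi> t then am else ap) * (ua - (if x < \<xi> t then ul t else ur t)) * \<psi> (x, t))
          + tint (\<lambda>t. (ua - \<sigma> t) * \<omega> t * \<psi> (\<xi> t, t)))
   = - (LBINT x. (if x < 0 then am else ap) * (if x < 0 then um else up) * \<psi> (x, 0))"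
proof -
  have ex1: "\<And>x t. (if x < \<xi> t then am else ap) * (if x < \<xi> t then ul t else ur t) * pt \<psi> x t
      = (if x < \<xi> t then am * ul t else ap * ur t) * ft (x, t)"
    by (simp add: pte)
  have e1: "dint (\<lambda>x t. (if x < \<xi> t then am else ap) * (if x < \<xi> t then ul t else ur t) * pt \<psi> x t)
     = integral {0..T} (\<lambda>t. am * ul t * integral {-K..0} (\<lambda>y. ft (y + \<xi> t, t)))
       + integral {0..T} (\<lambda>t. ap * ur t * integral {0..K} (\<lambda>y. ft (y + \<xi> t, t)))"
  proof -
    have "dint (\<lambda>x t. (if x < \<xi> t then am else ap) * (if x < \<xi> t then ul t else ur t) * pt \<psi> x t)
       = integral {0..T} (\<lambda>t. am * ul t * integral {-K..0} (\<lambda>y. ft (y + \<xi> t, t)) + ap * ur t * integral {0..K} (\<lambda>y. ft (y + \<xi> t, t)))"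
      unfolding dint_def ex1
      by (rule outer_ft[where A="\<lambda>t. am * ul t" and B="\<lambda>t. ap * ur t"]; intro continuous_intros ulc urc)
    also have "\<dots> = integral {0..T} (\<lambda>t. am * ul t * integral {-K..0} (\<lambda>y. ft (y + \<xi> t, t)))
       + integral {0..T} (\<lambda>t. ap * ur t * integral {0..K} (\<lambda>y. ft (y + \<xi> t, t)))"
      by (rule int_add2; intro continuous_intros cI2 ulc urc)
    finally show ?thesis .
  qed
  have cdL: "\<And>t. t \<in> {0..T} \<Longrightarrow> ((\<lambda>t. am * ul t) has_real_derivative am * (\<mu> * (ua - ul t))) (at t within {0..T})"
    by (rule DERIV_cmult[OF uld])
  have cdR: "\<And>t. t \<in> {0..T} \<Longrightarrow> ((\<lambda>t. ap * ur t) has_real_derivative ap * (\<mu> * (ua - ur t))) (at t within {0..T})"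
    by (rule DERIV_cmult[OF urd])
  have ccL: "continuous_on {0..T} (\<lambda>t. am * (\<mu> * (ua - ul t)))" by (intro continuous_intros ulc)
  have ccR: "continuous_on {0..T} (\<lambda>t. ap * (\<mu> * (ua - ur t)))" by (intro continuous_intros urc)
  note k1 = key_L[OF deriv cfx cft T0 K0' \<xi>d \<sigma>cT cdL ccL \<xi>0 vT vL]
  note k2 = key_R[OF deriv cfx cft T0 K0' \<xi>d \<sigma>cT cdR ccR \<xi>0 vT vR]
  have ex3: "\<And>x t. (if x < \<xi> t then am else ap) * (if x < \<xi> t then ul t else ur t)\<^sup>2 * px \<psi> x t
      = (if x < \<xi> t then am * (ul t)\<^sup>2 else ap * (ur t)\<^sup>2) * fx (x, t)"
    by (simp add: pxe)
  have e3: "dint (\<lambda>x t. (if x < \<xi> t then am else ap) * (if x < \<xi> t then ul t else ur t)\<^sup>2 * px \<psi> x t)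
     = integral {0..T} (\<lambda>t. (am * (ul t)\<^sup>2 - ap * (ur t)\<^sup>2) * \<psi> (\<xi> t, t))"
    unfolding dint_def ex3
    by (rule outer_fx[where A="\<lambda>t. am * (ul t)\<^sup>2" and B="\<lambda>t. ap * (ur t)\<^sup>2", simplified]; intro continuous_intros ulc urc)
  have t2: "tint (\<lambda>t. \<omega> t * \<sigma> t * pt \<psi> (\<xi> t) t) = integral {0..T} (\<lambda>t. \<omega> t * \<sigma> t * ft (\<xi> t, t))"
    unfolding pte by (rule tint_eq) (use c\<Psi> TR T0 ft0 in \<open>auto intro!: continuous_intros \<omega>cT \<sigma>cT\<close>)
  have ex4: "(\<lambda>t. \<sigma> t * \<omega> t * \<sigma> t * px \<psi> (\<xi> t) t) = (\<lambda>t. \<omega> t * \<sigma> t * \<sigma> t * fx (\<xi> t, t))"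
    by (simp add: pxe fun_eq_iff algebra_simps)
  have t4: "tint (\<lambda>t. \<sigma> t * \<omega> t * \<sigma> t * px \<psi> (\<xi> t) t) = integral {0..T} (\<lambda>t. \<omega> t * \<sigma> t * \<sigma> t * fx (\<xi> t, t))"
    unfolding ex4 by (rule tint_eq) (use c\<Psi> TR T0 fx0 in \<open>auto intro!: continuous_intros \<omega>cT \<sigma>cT\<close>)
  have w0: "\<omega> 0 * \<sigma> 0 = 0" by (simp add: \<omega>0)
  have w'c: "continuous_on {0..T} (\<lambda>t. (ap * ur t - am * ul t) * \<sigma> t - (ap * (ur t)\<^sup>2 - am * (ul t)\<^sup>2) + \<mu> * (ua - \<sigma> t) * \<omega> t)"
    by (intro continuous_intros \<sigma>cT ulc urc \<omega>cT)
  have triv: "\<And>t. t \<in> {0..T} \<Longrightarrow> t \<in> {0..T}" by simp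
  note bp = byparts[OF deriv cfx cft T0 \<xi>d \<sigma>cT \<omega>\<sigma>d _ w0 vT]
  note bp' = bp[OF triv triv w'c]
  have ex5: "\<And>x t. (if x < \<xi> t then am else ap) * (ua - (if x < \<xi> t then ul t else ur t)) * \<psi> (x, t)
      = (if x < \<xi> t then am * (ua - ul t) else ap * (ua - ur t)) * \<psi> (x, t)"
    by simp
  have e5: "dint (\<lambda>x t. (if x < \<xi> t then am else ap) * (ua - (if x < \<xi> t then ul t else ur t)) * \<psi> (x, t))
     = integral {0..T} (\<lambda>t. am * (ua - ul t) * integral {-K..0} (\<lambda>y. \<psi> (y + \<xi> t, t)))
       + integral {0..T} (\<lambda>t. ap * (ua - ur t) * integral {0..K} (\<lambda>y. \<psi> (y + \<xi> t, t)))"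
  proof -
    have "dint (\<lambda>x t. (if x < \<xi> t then am else ap) * (ua - (if x < \<xi> t then ul t else ur t)) * \<psi> (x, t))
       = integral {0..T} (\<lambda>t. am * (ua - ul t) * integral {-K..0} (\<lambda>y. \<psi> (y + \<xi> t, t)) + ap * (ua - ur t) * integral {0..K} (\<lambda>y. \<psi> (y + \<xi> t, t)))"
      unfolding dint_def ex5
      by (rule outer_psi[where A="\<lambda>t. am * (ua - ul t)" and B="\<lambda>t. ap * (ua - ur t)"]; intro continuous_intros ulc urc)
    also have "\<dots> = integral {0..T} (\<lambda>t. am * (ua - ul t) * integral {-K..0} (\<lambda>y. \<psi> (y + \<xi> t, t)))
       + integral {0..T} (\<lambda>t. ap * (ua - ur t) * integral {0..K} (\<lambda>y. \<psi> (y + \<xi> t, t)))"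
      by (rule int_add2; intro continuous_intros cI2 ulc urc)
    finally show ?thesis .
  qed
  have m1: "\<mu> * integral {0..T} (\<lambda>t. am * (ua - ul t) * integral {-K..0} (\<lambda>y. \<psi> (y + \<xi> t, t)))
      = integral {0..T} (\<lambda>t. am * (\<mu> * (ua - ul t)) * integral {-K..0} (\<lambda>y. \<psi> (y + \<xi> t, t)))"
    by (subst integral_mult_right[symmetric], rule integral_cong) (simp add: algebra_simps)
  have m2: "\<mu> * integral {0..T} (\<lambda>t. ap * (ua - ur t) * integral {0..K} (\<lambda>y. \<psi> (y + \<xi> t, t)))
      = integral {0..T} (\<lambda>t. ap * (\<mu> * (ua - ur t)) * integral {0..K} (\<lambda>y. \<psi> (y + \<xi> t, t)))"
    by (subst integral_mult_right[symmetric], rule integral_cong) (simp add: algebra_simps)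
  have t5: "tint (\<lambda>t. (ua - \<sigma> t) * \<omega> t * \<psi> (\<xi> t, t)) = integral {0..T} (\<lambda>t. (ua - \<sigma> t) * \<omega> t * \<psi> (\<xi> t, t))"
    by (rule tint_eq) (use c\<Psi> TR T0 supp in \<open>auto intro!: continuous_intros \<omega>cT \<sigma>cT\<close>)
  have m3: "\<mu> * integral {0..T} (\<lambda>t. (ua - \<sigma> t) * \<omega> t * \<psi> (\<xi> t, t))
      = integral {0..T} (\<lambda>t. \<mu> * ((ua - \<sigma> t) * \<omega> t * \<psi> (\<xi> t, t)))"
    by simp
  have l5: "integral {0..T} (\<lambda>t. - (am * ul t * \<sigma> t * \<psi> (\<xi> t, t))) + integral {0..T} (\<lambda>t. ap * ur t * \<sigma> t * \<psi> (\<xi> t, t))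
      + integral {0..T} (\<lambda>t. (am * (ul t)\<^sup>2 - ap * (ur t)\<^sup>2) * \<psi> (\<xi> t, t))
      + integral {0..T} (\<lambda>t. - (((ap * ur t - am * ul t) * \<sigma> t - (ap * (ur t)\<^sup>2 - am * (ul t)\<^sup>2) + \<mu> * (ua - \<sigma> t) * \<omega> t) * \<psi> (\<xi> t, t)))
      + integral {0..T} (\<lambda>t. \<mu> * ((ua - \<sigma> t) * \<omega> t * \<psi> (\<xi> t, t))) = 0"
    by (rule lin5) (auto intro!: continuous_intros c\<Psi> w'c \<sigma>cT ulc urc \<omega>cT simp: algebra_simps power2_eq_square)
  then have l5': "- integral {0..T} (\<lambda>t. am * ul t * \<sigma> t * \<psi> (\<xi> t, t)) + integral {0..T} (\<lambda>t. ap * ur t * \<sigma> t * \<psi> (\<xi> t, t))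
      + integral {0..T} (\<lambda>t. (am * (ul t)\<^sup>2 - ap * (ur t)\<^sup>2) * \<psi> (\<xi> t, t))
      + - integral {0..T} (\<lambda>t. ((ap * ur t - am * ul t) * \<sigma> t - (ap * (ur t)\<^sup>2 - am * (ul t)\<^sup>2) + \<mu> * (ua - \<sigma> t) * \<omega> t) * \<psi> (\<xi> t, t))
      + integral {0..T} (\<lambda>t. \<mu> * ((ua - \<sigma> t) * \<omega> t * \<psi> (\<xi> t, t))) = 0"
    by (simp only: integral_neg)
  have exi: "\<And>x. (if x < 0 then am else ap) * (if x < 0 then um else up) * \<psi> (x, 0)
      = (if x < 0 then am * um else ap * up) * \<psi> (x, 0)" by simp
  have ini: "(LBINT x. (if x < 0 then am else ap) * (if x < 0 then um else up) * \<psi> (x, 0))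
      = am * um * integral {-K..0} (\<lambda>y. \<psi> (y, 0)) + ap * up * integral {0..K} (\<lambda>y. \<psi> (y, 0))"
    unfolding exi by (rule init_eq)
  have u0: "ul 0 = um" "ur 0 = up" by (simp_all add: ul_def ur_def)
  have dist: "\<mu> * (A + B) = \<mu> * A + \<mu> * B" for A B by (simp add: distrib_left)
  have me5: "\<mu> * dint (\<lambda>x t. (if x < \<xi> t then am else ap) * (ua - (if x < \<xi> t then ul t else ur t)) * \<psi> (x, t))
     = \<mu> * integral {0..T} (\<lambda>t. am * (ua - ul t) * integral {-K..0} (\<lambda>y. \<psi> (y + \<xi> t, t)))
       + \<mu> * integral {0..T} (\<lambda>t. ap * (ua - ur t) * integral {0..K} (\<lambda>y. \<psi> (y + \<xi> t, t)))"
    unfolding e5 by (simp add: distrib_left)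
  have mt5: "\<mu> * tint (\<lambda>t. (ua - \<sigma> t) * \<omega> t * \<psi> (\<xi> t, t))
     = \<mu> * integral {0..T} (\<lambda>t. (ua - \<sigma> t) * \<omega> t * \<psi> (\<xi> t, t))"
    unfolding t5 ..
  show ?thesis
    using me5 mt5 e1 k1[unfolded u0 mult_minus_left] k2[unfolded u0 mult_minus_left] e3 t2 t4 bp' e5 m1 m2 t5 m3 l5' ini
      dist[of "dint (\<lambda>x t. (if x < \<xi> t then am else ap) * (ua - (if x < \<xi> t then ul t else ur t)) * \<psi> (x, t))"
           "tint (\<lambda>t. (ua - \<sigma> t) * \<omega> t * \<psi> (\<xi> t, t))"]
      dist[of "integral {0..T} (\<lambda>t. am * (ua - ul t) * integral {-K..0} (\<lambda>y. \<psi> (y + \<xi> t, t)))"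
           "integral {0..T} (\<lambda>t. ap * (ua - ur t) * integral {0..K} (\<lambda>y. \<psi> (y + \<xi> t, t)))"]
    by linarith
qed

end



theorem mainTheorem10:
  fixes \<mu> ua am ap um up :: real
    and \<omega> \<sigma> :: "real \<Rightarrow> real"
  assumes mu_pos: "\<mu> > 0"
    and am_pos: "am > 0" and ap_pos: "ap > 0"
    and u_order: "um > up"
    and omega_C1: "C1_halfline \<omega>" and sigma_C1: "C1_halfline \<sigma>"
    and RH1: "\<And>t. t \<ge> 0 \<Longrightarrow>
      (\<omega> has_real_derivative
         ((ap - am) * \<sigma> t
          - (ap * (ua + (up - ua) * exp (-\<mu> * t)) - am * (ua + (um - ua) * exp (-\<mu> * t)))))
      (at t within {0..})"
    and RH2: "\<And>t. t \<ge> 0 \<Longrightarrow>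
      ((\<lambda>s. \<omega> s * \<sigma> s) has_real_derivative
         ((ap * (ua + (up - ua) * exp (-\<mu> * t)) - am * (ua + (um - ua) * exp (-\<mu> * t))) * \<sigma> t
          - (ap * (ua + (up - ua) * exp (-\<mu> * t))\<^sup>2 - am * (ua + (um - ua) * exp (-\<mu> * t))\<^sup>2)
          + \<mu> * (ua - \<sigma> t) * \<omega> t))
      (at t within {0..})"
    and omega0: "\<omega> 0 = 0"
    and between: "\<And>t. t \<ge> 0 \<Longrightarrow>
      ua + (up - ua) * exp (-\<mu> * t) < \<sigma> t \<and> \<sigma> t < ua + (um - ua) * exp (-\<mu> * t)"
  shows
    "(let ul = (\<lambda>t. ua + (um - ua) * exp (-\<mu> * t));
          ur = (\<lambda>t. ua + (up - ua) * exp (-\<mu> * t));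
          \<xi> = (\<lambda>t. LBINT s:{0..t}. \<sigma> s);
          \<alpha>0 = (\<lambda>x t. if x < \<xi> t then am else ap);
          u0 = (\<lambda>x t. if x < \<xi> t then ul t else ur t);
          \<alpha>init = (\<lambda>x. if x < 0 then am else ap);
          uinit = (\<lambda>x. if x < 0 then um else up)
      in
        (\<forall>\<psi>. test_fun \<psi> \<longrightarrow>
           (dint (\<lambda>x t. \<alpha>0 x t * pt \<psi> x t) + tint (\<lambda>t. \<omega> t * pt \<psi> (\<xi> t) t))
           + (dint (\<lambda>x t. \<alpha>0 x t * u0 x t * px \<psi> x t)
              + tint (\<lambda>t. \<omega> t * \<sigma> t * px \<psi> (\<xi> t) t))
           = - (LBINT x. \<alpha>init x * \<psi> (x, 0)))
      \<and> (\<forall>\<psi>. test_fun \<psi> \<longrightarrow>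
           (dint (\<lambda>x t. \<alpha>0 x t * u0 x t * pt \<psi> x t)
              + tint (\<lambda>t. \<omega> t * \<sigma> t * pt \<psi> (\<xi> t) t))
           + (dint (\<lambda>x t. \<alpha>0 x t * (u0 x t)\<^sup>2 * px \<psi> x t)
              + tint (\<lambda>t. \<sigma> t * \<omega> t * \<sigma> t * px \<psi> (\<xi> t) t))
           + \<mu> * (dint (\<lambda>x t. \<alpha>0 x t * (ua - u0 x t) * \<psi> (x, t))
                  + tint (\<lambda>t. (ua - \<sigma> t) * \<omega> t * \<psi> (\<xi> t, t)))
           = - (LBINT x. \<alpha>init x * uinit x * \<psi> (x, 0)))
      \<and> (\<forall>t\<ge>0. ur t < \<sigma> t \<and> \<sigma> t < ul t))"
proof -
  define ul where "ul t = ua + (um - ua) * exp (- \<mu> * t)" for t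
  define ur where "ur t = ua + (up - ua) * exp (- \<mu> * t)" for t
  define \<xi> where "\<xi> t = (LBINT s:{0..t}. \<sigma> s)" for t
  have \<sigma>c: "continuous_on {0..} \<sigma>"
  proof -
    from sigma_C1 obtain f' where f': "\<forall>t\<ge>0. (\<sigma> has_real_derivative f' t) (at t within {0..})"
      unfolding C1_halfline_def by blast
    show ?thesis by (rule cont_of_DERIV) (use f' in auto)
  qed
  have RH1': "\<And>t. t \<ge> 0 \<Longrightarrow> (\<omega> has_real_derivative ((ap - am) * \<sigma> t - (ap * ur t - am * ul t))) (at t within {0..})"
    using RH1 by (simp add: ul_def ur_def)
  have RH2': "\<And>t. t \<ge> 0 \<Longrightarrow> ((\<lambda>s. \<omega> s * \<sigma> s) has_real_derivative
         ((ap * ur t - am * ul t) * \<sigma> t - (ap * (ur t)\<^sup>2 - am * (ul t)\<^sup>2) + \<mu> * (ua - \<sigma> t) * \<omega> t)) (at t within {0..})"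
    using RH2 by (simp add: ul_def ur_def)
  have \<xi>i: "\<And>t. t \<ge> 0 \<Longrightarrow> \<xi> t = integral {0..t} \<sigma>"
    unfolding \<xi>_def
    by (rule set_borel_integral_eq_integral(2)[OF borel_integrable_atLeastAtMost'[OF continuous_on_subset[OF \<sigma>c]]]) auto
  have E: "(dint (\<lambda>x t. (if x < \<xi> t then am else ap) * pt \<psi> x t) + tint (\<lambda>t. \<omega> t * pt \<psi> (\<xi> t) t))
   + (dint (\<lambda>x t. (if x < \<xi> t then am else ap) * (if x < \<xi> t then ul t else ur t) * px \<psi> x t)
      + tint (\<lambda>t. \<omega> t * \<sigma> t * px \<psi> (\<xi> t) t))
   = - (LBINT x. (if x < 0 then am else ap) * \<psi> (x, 0))
   \<and> (dint (\<lambda>x t. (if x < \<xi> t then am else ap) * (if x < \<xi> t then ul t else ur t) * pt \<psi> x t)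
      + tint (\<lambda>t. \<omega> t * \<sigma> t * pt \<psi> (\<xi> t) t))
   + (dint (\<lambda>x t. (if x < \<xi> t then am else ap) * (if x < \<xi> t then ul t else ur t)\<^sup>2 * px \<psi> x t)
      + tint (\<lambda>t. \<sigma> t * \<omega> t * \<sigma> t * px \<psi> (\<xi> t) t))
   + \<mu> * (dint (\<lambda>x t. (if x < \<xi> t then am else ap) * (ua - (if x < \<xi> t then ul t else ur t)) * \<psi> (x, t))
          + tint (\<lambda>t. (ua - \<sigma> t) * \<omega> t * \<psi> (\<xi> t, t)))
   = - (LBINT x. (if x < 0 then am else ap) * (if x < 0 then um else up) * \<psi> (x, 0))"
    if tf: "test_fun \<psi>" for \<psi>
  proof -
    from tf obtain R where supp: "\<And>x t. t \<ge> 0 \<Longrightarrow> \<bar>x\<bar> > R \<or> t > R \<Longrightarrow> \<psi> (x, t) = 0"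
      and sm: "smooth2 \<psi>" unfolding test_fun_def by blast
    from sm have "Ck (Suc 0) \<psi>" unfolding smooth2_def by blast
    then obtain fx ft where deriv0: "\<forall>p. (\<psi> has_derivative (\<lambda>h. fx p * fst h + ft p * snd h)) (at p)"
      and cfx: "continuous_on UNIV fx" and cft: "continuous_on UNIV ft" by auto
    have deriv: "\<And>p. (\<psi> has_derivative (\<lambda>h. fx p * fst h + ft p * snd h)) (at p)" using deriv0 by blast
    define T where "T = \<bar>R\<bar> + 1"
    have \<sigma>cT: "continuous_on {0..T} \<sigma>" by (rule continuous_on_subset[OF \<sigma>c]) auto
    have c\<xi>: "continuous_on {0..T} \<xi>"
      by (rule continuous_on_eq[OF indefinite_integral_continuous_1[OF integrable_continuous_interval[OF \<sigma>cT]]])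
         (simp add: \<xi>i)
    have "bounded (\<xi> ` {0..T})"
      by (rule compact_imp_bounded[OF compact_continuous_image[OF c\<xi> compact_Icc]])
    then obtain B where B: "\<forall>t\<in>{0..T}. \<bar>\<xi> t\<bar> \<le> B"
      unfolding bounded_iff by auto
    define M where "M = max B 0"
    have Mb: "\<And>t. t \<in> {0..T} \<Longrightarrow> \<bar>\<xi> t\<bar> \<le> M" using B unfolding M_def by force
    have M0: "0 \<le> M" unfolding M_def by simp
    interpret r: rh \<psi> fx ft R \<sigma> \<omega> \<xi> ul ur \<mu> ua am ap um up T M "\<bar>R\<bar> + M + 1"
      by (rule rh.intro[OF deriv cfx cft supp \<sigma>c \<xi>_def ul_def ur_def RH1' RH2' omega0 T_def Mb M0 refl])
    show ?thesis using r.eq1 r.eq2 by blast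
  qed
  have ent: "\<forall>t\<ge>0. ur t < \<sigma> t \<and> \<sigma> t < ul t" using between by (simp add: ul_def ur_def)
  show ?thesis
    unfolding Let_def ul_def[symmetric] ur_def[symmetric] \<xi>_def[symmetric]
    using E ent by blast
qed



end
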